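(* Let $T\in\mathcal B(\mathcal H)$ be left-invertible, with Cauchy dual $T'=T(T^*T)^{-1}$. The following are equivalent: (i) $T$ is a $2$-isometry and $T^*T(\ker T^* )\subseteq\ker T^*$; (ii) $T$ is a $2$-isometry and $T^*T(T(\mathcal H))\subseteq T(\mathcal H)$; (iii) $T'-2T+T^*T^2=0$; (iv) $(T^*T^2T^*-2TT^*+I)T=0$; (v) $T'(T^*T-I)=(T^*T-I)T$.
   Context: A $2$-isometry is $T$ with $I-2T^*T+T^{*2}T^2=0$. *)

theory Defs
  imports "HOL-Analysis.Analysis"
begin

text \<open>Bounded operators on a (real) Hilbert space H are modelled as bounded linear
functions H \<Rightarrow> H; operator product is composition, I is id.
is_adjoint T S: S is the Hilbert-space adjoint T* of T.\<close>

definition is_adjoint :: "('a::real_inner \<Rightarrow> 'a) \<Rightarrow> ('a \<Rightarrow> 'a) \<Rightarrow> bool" where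
  "is_adjoint T S \<longleftrightarrow> bounded_linear S \<and> (\<forall>x y. inner (T x) y = inner x (S y))"

definition left_invertible :: "('a::real_normed_vector \<Rightarrow> 'a) \<Rightarrow> bool" where
  "left_invertible T \<longleftrightarrow> (\<exists>L. bounded_linear L \<and> L \<circ> T = id)"

definition two_isometry :: "('a::real_vector \<Rightarrow> 'a) \<Rightarrow> ('a \<Rightarrow> 'a) \<Rightarrow> bool" where
  "two_isometry T Ts \<longleftrightarrow> (\<forall>x. x - 2 *\<^sub>R Ts (T x) + Ts (Ts (T (T x))) = 0)"

text \<open>Cauchy dual T' = T (T*T)^{-1} (T*T is invertible when T is left-invertible).\<close>
definition cauchy_dual :: "('a \<Rightarrow> 'a) \<Rightarrow> ('a \<Rightarrow> 'a) \<Rightarrow> 'a \<Rightarrow> 'a" where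
  "cauchy_dual T Ts = T \<circ> inv (Ts \<circ> T)"

definition ker :: "('a \<Rightarrow> 'b::zero) \<Rightarrow> 'a set" where
  "ker S = {x. S x = 0}"

end

theory Submission
  imports Defs
begin

lemma sw_vec: "\<And>a b c::'a::real_vector. a - b + c = c - b + a" by (simp add: algebra_simps)
lemma rr_vec: fixes a b c :: "'a::real_vector" shows "(b - 2 *\<^sub>R a + c = 0) \<longleftrightarrow> (a - b = c - a)"
proof -
  have "a - b - (c - a) = - (b - 2 *\<^sub>R a + c)" by (simp add: algebra_simps scaleR_2)
  then show ?thesis by (metis eq_iff_diff_eq_0 neg_equal_0_iff_equal)
qed

lemma surjA:
  fixes T Ts :: "'a::{real_inner, complete_space} \<Rightarrow> 'a"
  assumes bT: "bounded_linear T" and adj: "is_adjoint T Ts" and li: "left_invertible T"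
  shows "surj (Ts \<circ> T)"
proof -
  obtain L where bL: "bounded_linear L" and LT: "L \<circ> T = id" using li unfolding left_invertible_def by blast
  obtain K where K: "K > 0" "\<And>x. norm (L x) \<le> norm x * K" using bounded_linear.pos_bounded[OF bL] by blast
  have bTs: "bounded_linear Ts" and ad: "\<And>x y. inner (T x) y = inner x (Ts y)" using adj unfolding is_adjoint_def by auto
  define A where "A = Ts \<circ> T"
  have bA: "bounded_linear A" unfolding A_def using bTs bT by (simp add: bounded_linear_compose comp_def)
  obtain M where M: "M > 0" "\<And>x. norm (A x) \<le> norm x * M" using bounded_linear.pos_bounded[OF bA] by blast
  have lowT: "norm x \<le> norm (T x) * K" for x
  proof -
    have "L (T x) = x" using LT by (metis comp_apply id_apply)
    then show ?thesis using K(2)[of "T x"] by simp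
  qed
  have inA: "inner u (A u) = (norm (T u))^2" for u
    unfolding A_def using ad[of u "T u"] by (simp add: power2_norm_eq_inner)
  define t where "t = 1 / (K^2 * M^2)"
  define s where "s = 1 / (K^4 * M^2)"
  have tpos: "t > 0" and spos: "s > 0" using K M by (auto simp: t_def s_def)
  have key: "(norm (u - t *\<^sub>R A u))^2 \<le> (1 - s) * (norm u)^2" for u
  proof -
    have e: "(norm (u - t *\<^sub>R A u))^2 = (norm u)^2 - 2 * t * (norm (T u))^2 + t^2 * (norm (A u))^2"
    proof -
      have "(norm (u - t *\<^sub>R A u))^2 = inner (u - t *\<^sub>R A u) (u - t *\<^sub>R A u)"
        by (simp add: power2_norm_eq_inner)
      also have "\<dots> = inner u u - 2 * t * inner u (A u) + t^2 * inner (A u) (A u)"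
        by (simp add: inner_diff_left inner_diff_right inner_commute power2_eq_square algebra_simps)
      also have "\<dots> = (norm u)^2 - 2 * t * (norm (T u))^2 + t^2 * (norm (A u))^2"
        by (simp add: inA power2_norm_eq_inner)
      finally show ?thesis .
    qed
    have l: "(norm u)^2 / K^2 \<le> (norm (T u))^2"
    proof -
      have "(norm u)^2 \<le> (norm (T u) * K)^2" using lowT[of u] by (simp add: power_mono)
      then show ?thesis using K by (simp add: divide_le_eq power_mult_distrib)
    qed
    have m: "(norm (A u))^2 \<le> (norm u)^2 * M^2"
      using M(2)[of u] by (metis norm_ge_zero power_mono power_mult_distrib)
    have "(norm (u - t *\<^sub>R A u))^2 \<le> (norm u)^2 - 2 * t * ((norm u)^2 / K^2) + t^2 * ((norm u)^2 * M^2)"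
    proof -
      have "2 * t * ((norm u)^2 / K^2) \<le> 2 * t * (norm (T u))^2" using l tpos by (intro mult_left_mono) auto
      moreover have "t^2 * (norm (A u))^2 \<le> t^2 * ((norm u)^2 * M^2)" using m by (simp add: mult_left_mono)
      ultimately show ?thesis unfolding e by linarith
    qed
    also have "\<dots> = (1 - s) * (norm u)^2"
      using K M by (simp add: t_def s_def field_simps power2_eq_square power4_eq_xxxx)
    finally show ?thesis .
  qed
  define q where "q = sqrt (max 0 (1 - s))"
  have q0: "0 \<le> q" and q1: "q < 1" using spos by (auto simp: q_def max_def real_sqrt_lt_1_iff)
  have "\<exists>z. (Ts \<circ> T) z = y" for y
  proof -
    define f where "f z = z - t *\<^sub>R (A z - y)" for z
    have lip: "\<forall>z w. dist (f z) (f w) \<le> q * dist z w"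
    proof (intro allI)
      fix z w
      have "f z - f w = (z - w) - t *\<^sub>R A (z - w)"
        unfolding f_def by (simp add: linear_simps[OF bA] algebra_simps)
      then have "(dist (f z) (f w))^2 \<le> (1 - s) * (dist z w)^2"
        using key[of "z - w"] by (simp add: dist_norm)
      also have "\<dots> \<le> (q * dist z w)^2"
        by (simp add: q_def power_mult_distrib mult_right_mono)
      finally show "dist (f z) (f w) \<le> q * dist z w"
        using q0 by (meson power2_le_imp_le zero_le_dist mult_nonneg_nonneg)
    qed
    obtain z where "f z = z" using banach_fix_type[OF q0 q1 lip] by blast
    then have "A z = y" using tpos unfolding f_def by simp
    then show ?thesis by (auto simp add: A_def)
  qed
  then show ?thesis by (metis surj_def)
qed


theorem mainTheorem3:
  fixes T Ts :: "'a::{real_inner, complete_space} \<Rightarrow> 'a"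
  assumes "bounded_linear T"
    and "is_adjoint T Ts"
    and "left_invertible T"
  defines "T' \<equiv> cauchy_dual T Ts"
  shows "((two_isometry T Ts \<and> (Ts \<circ> T) ` ker Ts \<subseteq> ker Ts)
           \<longleftrightarrow> (two_isometry T Ts \<and> (Ts \<circ> T) ` range T \<subseteq> range T))
       \<and> ((two_isometry T Ts \<and> (Ts \<circ> T) ` range T \<subseteq> range T)
           \<longleftrightarrow> (\<forall>x. T' x - 2 *\<^sub>R T x + Ts (T (T x)) = 0))
       \<and> ((\<forall>x. T' x - 2 *\<^sub>R T x + Ts (T (T x)) = 0)
           \<longleftrightarrow> (\<forall>x. Ts (T (T (Ts (T x)))) - 2 *\<^sub>R T (Ts (T x)) + T x = 0))
       \<and> ((\<forall>x. Ts (T (T (Ts (T x)))) - 2 *\<^sub>R T (Ts (T x)) + T x = 0)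
           \<longleftrightarrow> (\<forall>x. T' (Ts (T x) - x) = Ts (T (T x)) - T x))"
proof -
  note bT = assms(1)
  obtain L where LT: "L \<circ> T = id" using assms(3) unfolding left_invertible_def by blast
  have bTs: "bounded_linear Ts" and ad: "\<And>x y. inner (T x) y = inner x (Ts y)"
    using assms(2) unfolding is_adjoint_def by auto
  define A where "A = Ts \<circ> T"
  define B where "B = inv A"
  have bA: "bounded_linear A" unfolding A_def using bTs bT by (simp add: bounded_linear_compose comp_def)
  have Ax: "A x = Ts (T x)" for x by (simp add: A_def)
  have LTx: "L (T x) = x" for x using LT by (metis comp_apply id_apply)
  have surjA: "surj A" unfolding A_def using surjA[OF assms(1-3)] .
  have sa: "inner a (A b) = inner (A a) b" for a b
    unfolding Ax by (metis ad inner_commute)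
  have injA: "inj A"
  proof (rule injI)
    fix x y assume "A x = A y"
    then have "A (x - y) = 0" by (simp add: linear_simps[OF bA])
    then have "inner (T (x - y)) (T (x - y)) = 0" by (simp add: ad Ax)
    then have "T (x - y) = 0" by simp
    then have "T x = T y" by (simp add: linear_simps[OF bT])
    then show "x = y" using LTx by metis
  qed
  have AB: "A (B y) = y" for y unfolding B_def using surjA by (simp add: surj_f_inv_f)
  have BA: "B (A x) = x" for x unfolding B_def using injA by (simp add: inv_f_f)
  have T'x: "T' x = T (B x)" for x by (simp add: T'_def cauchy_dual_def B_def A_def)
  have tw: "two_isometry T Ts \<longleftrightarrow> (\<forall>x. x - 2 *\<^sub>R A x + Ts (A (T x)) = 0)"
    unfolding two_isometry_def Ax by simp
  have TL: "T (a - b) = T a - T b" "T (c *\<^sub>R a) = c *\<^sub>R T a" for a b c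
    by (simp_all add: linear_simps[OF bT])
  have TsL: "Ts (a - b) = Ts a - Ts b" "Ts (c *\<^sub>R a) = c *\<^sub>R Ts a" for a b c
    by (simp_all add: linear_simps[OF bTs])
  have AL: "A (a - b) = A a - A b" "A (c *\<^sub>R a) = c *\<^sub>R A a" for a b c
    by (simp_all add: linear_simps[OF bA])
  have A2: "A (2 *\<^sub>R x - B x) = 2 *\<^sub>R A x - x" for x by (simp add: AL AB)
  define P1 where "P1 = (two_isometry T Ts \<and> (Ts \<circ> T) ` ker Ts \<subseteq> ker Ts)"
  define P2 where "P2 = (two_isometry T Ts \<and> (Ts \<circ> T) ` range T \<subseteq> range T)"
  define P3 where "P3 = (\<forall>x. T' x - 2 *\<^sub>R T x + Ts (T (T x)) = 0)"
  define P4 where "P4 = (\<forall>x. Ts (T (T (Ts (T x)))) - 2 *\<^sub>R T (Ts (T x)) + T x = 0)"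
  define P5 where "P5 = (\<forall>x. T' (Ts (T x) - x) = Ts (T (T x)) - T x)"
  have P3': "P3 \<longleftrightarrow> (\<forall>x. A (T x) = 2 *\<^sub>R T x - T (B x))"
    unfolding P3_def T'x Ax[symmetric] by (metis (no_types, lifting) add_diff_cancel_left' diff_add_cancel diff_diff_eq2 eq_iff_diff_eq_0)
  have r2: "P2 \<Longrightarrow> P3"
  proof -
    assume P2
    then have t: "\<And>x. x - 2 *\<^sub>R A x + Ts (A (T x)) = 0" and rg: "A ` range T \<subseteq> range T"
      unfolding P2_def tw A_def by auto
    show P3 unfolding P3'
    proof
      fix x
      obtain y where y: "A (T x) = T y" using rg by blast
      have "A y = 2 *\<^sub>R A x - x" using t[of x] unfolding y Ax[symmetric]
        by (metis add_diff_cancel_left' diff_add_cancel diff_diff_eq2 eq_iff_diff_eq_0)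
      then have "A y = A (2 *\<^sub>R x - B x)" by (simp add: A2)
      then have "y = 2 *\<^sub>R x - B x" using injA by (simp add: inj_eq)
      then show "A (T x) = 2 *\<^sub>R T x - T (B x)" using y by (simp add: TL)
    qed
  qed
  have r3: "P3 \<Longrightarrow> P2"
  proof -
    assume P3
    then have e: "\<And>x. A (T x) = T (2 *\<^sub>R x - B x)" unfolding P3' by (simp add: TL)
    have "x - 2 *\<^sub>R A x + Ts (A (T x)) = 0" for x
      unfolding e Ax[symmetric] A2 by simp
    moreover have "A ` range T \<subseteq> range T" using e by auto
    ultimately show P2 unfolding P2_def tw by (simp add: A_def)
  qed
  have r21: "P2 \<Longrightarrow> P1"
  proof -
    assume P2
    then have rg: "A ` range T \<subseteq> range T" and tw1: "two_isometry T Ts"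
      unfolding P2_def A_def by auto
    have "Ts (A z) = 0" if z: "Ts z = 0" for z
    proof -
      have "inner w (Ts (A z)) = 0" for w
      proof -
        obtain y where y: "A (T w) = T y" using rg by blast
        have "inner w (Ts (A z)) = inner (T w) (A z)" by (simp add: ad)
        also have "\<dots> = inner (A (T w)) z" by (rule sa)
        also have "\<dots> = inner y (Ts z)" by (simp add: y ad)
        finally show ?thesis using z by simp
      qed
      from this[of "Ts (A z)"] show ?thesis by simp
    qed
    then show P1 unfolding P1_def using tw1 by (auto simp: ker_def A_def)
  qed
  have r12: "P1 \<Longrightarrow> P2"
  proof -
    assume P1
    then have t: "\<And>x. x - 2 *\<^sub>R A x + Ts (A (T x)) = 0" and kk: "\<And>z. Ts z = 0 \<Longrightarrow> Ts (A z) = 0"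
      unfolding P1_def tw by (auto simp: ker_def A_def image_subset_iff)
    have "A (T x) \<in> range T" for x
    proof -
      define z where "z = A (T x) - T (2 *\<^sub>R x - B x)"
      have "Ts z = Ts (A (T x)) - A (2 *\<^sub>R x - B x)" unfolding z_def TsL Ax ..
      also have "\<dots> = 0" unfolding A2 using t[of x]
        by (metis add_diff_cancel_left' diff_add_cancel diff_diff_eq2 eq_iff_diff_eq_0)
      finally have z0: "Ts z = 0" .
      have i1: "inner z (T v) = 0" for v by (metis ad inner_commute z0 inner_zero_right)
      have i2: "inner z (A (T x)) = 0"
        by (metis ad inner_commute sa kk[OF z0] inner_zero_right)
      have "inner z z = inner z (A (T x) - T (2 *\<^sub>R x - B x))"
        by (simp only: z_def)
      also have "\<dots> = inner z (A (T x)) - inner z (T (2 *\<^sub>R x - B x))"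
        by (rule inner_diff_right)
      finally
      have "inner z z = 0" using i1[of "2 *\<^sub>R x - B x"] i2 by (simp only: diff_self)
      then have "z = 0" by simp
      then have "A (T x) = T (2 *\<^sub>R x - B x)" unfolding z_def by (rule right_minus_eq[THEN iffD1])
      then show ?thesis by (metis rangeI)
    qed
    then show P2 using \<open>P1\<close> unfolding P1_def P2_def A_def by auto
  qed
  have r34: "P3 \<longleftrightarrow> P4"
  proof
    assume P3
    show P4 unfolding P4_def Ax[symmetric]
    proof
      fix x
      from \<open>P3\<close>[unfolded P3_def T'x Ax[symmetric], rule_format, of "A x"]
      have "T x - 2 *\<^sub>R T (A x) + A (T (A x)) = 0" unfolding BA .
      then show "A (T (A x)) - 2 *\<^sub>R T (A x) + T x = 0" by (metis sw_vec)
    qed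
  next
    assume P4
    show P3 unfolding P3_def T'x Ax[symmetric]
    proof
      fix x
      from \<open>P4\<close>[unfolded P4_def Ax[symmetric], rule_format, of "B x"]
      have "A (T x) - 2 *\<^sub>R T x + T (B x) = 0" unfolding AB .
      then show "T (B x) - 2 *\<^sub>R T x + A (T x) = 0" by (metis sw_vec)
    qed
  qed
  have BB: "B (A x - x) = x - B x" for x
  proof -
    have "A (x - B x) = A x - x" by (simp add: AL AB)
    then show ?thesis by (metis BA)
  qed
  have r35: "P3 \<longleftrightarrow> P5"
    unfolding P3_def P5_def T'x Ax[symmetric] BB TL
    by (simp add: rr_vec)
  show ?thesis
    using r2 r3 r21 r12 r34 r35
    unfolding P1_def[symmetric] P2_def[symmetric] P3_def[symmetric] P4_def[symmetric] P5_def[symmetric]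
    by blast
qed

end
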